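(* Let $n\geq 2$, $m>0$, and let $\tau$ be a maximal simplex of $\Delta_m^{n,2}=\mathrm{VR}(\{0,\ldots,m\}^n;2)$. Writing $V=\{0,\ldots,m\}^n$, one of the following holds: (i) $\tau=N[x]\cap V$ for some $x\in\mathbb{Z}^n$; (ii) $\tau=\{x,x^{i_0},x^{j_0},x^{i_0,j_0}\}\cap V$ for some $x\in\mathbb{Z}^n$ and $i_0,j_0\in[n]^{\pm}$; (iii) $\tau=\{x,x^{i_0,j_0},x^{j_0,k_0},x^{i_0,k_0}\}\cap V$ for some $x\in\mathbb{Z}^n$ and $i_0,j_0,k_0\in[n]^{\pm}$.
   Context: $\mathbb{Z}^n$ carries the Manhattan metric $d(x,y)=\sum_{i=1}^n|x_i-y_i|$; $\mathrm{VR}(X;r)$ is the simplicial complex on $X$ whose simplices are finite subsets of diameter at most $r$. Write $[n]=\{1,\ldots,n\}$, $[-n]=\{-1,\ldots,-n\}$, $[n]^{\pm}=[n]\cup[-n]$. For $x\in\mathbb{Z}^n$ and $i_1,\ldots,i_k\in[n]^{\pm}$ with pairwise distinct absolute values, $x^{i_1,\ldots,i_k}$ is obtained from $x$ by adding $1$ to coordinate $j$ for each $j\in\{i_1,\ldots,i_k\}\cap[n]$ and subtracting $1$ from coordinate $j$ for each $j$ with $-j\in\{i_1,\ldots,i_k\}$. $N[x]=\{y\in\mathbb{Z}^n: d(x,y)\leq 1\}$. *)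

theory Defs
  imports Main
begin

text \<open>Points of Z^n are represented as functions nat => int that vanish outside
coordinates 1..n.  Signed indices in [n]^{+-} are integers i with i ~= 0 and |i| <= n.\<close>

type_synonym pt = "nat \<Rightarrow> int"

definition lattice :: "nat \<Rightarrow> pt set" where
  "lattice n = {x. \<forall>i. i \<notin> {1..n} \<longrightarrow> x i = 0}"

definition grid :: "nat \<Rightarrow> nat \<Rightarrow> pt set" where
  "grid n m = {x \<in> lattice n. \<forall>i\<in>{1..n}. 0 \<le> x i \<and> x i \<le> int m}"

definition mdist :: "nat \<Rightarrow> pt \<Rightarrow> pt \<Rightarrow> int" where
  "mdist n x y = (\<Sum>i=1..n. \<bar>x i - y i\<bar>)"

definition vr_simplex :: "nat \<Rightarrow> pt set \<Rightarrow> int \<Rightarrow> pt set \<Rightarrow> bool" where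
  "vr_simplex n X r \<sigma> \<longleftrightarrow> \<sigma> \<noteq> {} \<and> finite \<sigma> \<and> \<sigma> \<subseteq> X \<and>
     (\<forall>x\<in>\<sigma>. \<forall>y\<in>\<sigma>. mdist n x y \<le> r)"

definition maximal_simplex :: "nat \<Rightarrow> pt set \<Rightarrow> int \<Rightarrow> pt set \<Rightarrow> bool" where
  "maximal_simplex n X r \<tau> \<longleftrightarrow> vr_simplex n X r \<tau> \<and>
     (\<forall>\<sigma>. vr_simplex n X r \<sigma> \<and> \<tau> \<subseteq> \<sigma> \<longrightarrow> \<sigma> = \<tau>)"

definition signed_idx :: "nat \<Rightarrow> int \<Rightarrow> bool" where
  "signed_idx n i \<longleftrightarrow> i \<noteq> 0 \<and> \<bar>i\<bar> \<le> int n"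

definition shift :: "pt \<Rightarrow> int \<Rightarrow> pt" where
  "shift x i = x(nat \<bar>i\<bar> := x (nat \<bar>i\<bar>) + sgn i)"

definition closed_nbhd :: "nat \<Rightarrow> pt \<Rightarrow> pt set" where
  "closed_nbhd n x = {y \<in> lattice n. mdist n x y \<le> 1}"

end

theory Submission
  imports Defs
begin


definition inU :: "pt \<Rightarrow> pt \<Rightarrow> int \<Rightarrow> bool" where
  "inU p s a \<longleftrightarrow> sgn a * (s (nat \<bar>a\<bar>) - p (nat \<bar>a\<bar>)) \<ge> 1"

lemma mdist_ge0: "0 \<le> mdist n x y"
  by (simp add: mdist_def sum_nonneg)

lemma mdist_sym: "mdist n x y = mdist n y x"
  by (simp add: mdist_def abs_minus_commute)

lemma mdist_tri: "mdist n x z \<le> mdist n x y + mdist n y z"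
  unfolding mdist_def sum.distrib[symmetric] by (rule sum_mono) arith

lemma mdist_self: "mdist n x x = 0"
  by (simp add: mdist_def)

lemma mdist_eq0:
  assumes "x \<in> lattice n" "y \<in> lattice n" "mdist n x y = 0" shows "x = y"
proof
  fix i
  have "\<forall>i\<in>{1..n}. \<bar>x i - y i\<bar> = 0"
    using assms(3) unfolding mdist_def by (subst sum_nonneg_eq_0_iff[symmetric]) auto
  then show "x i = y i" using assms(1,2) unfolding lattice_def by (cases "i \<in> {1..n}") auto
qed

lemma signed_k: "signed_idx n a \<Longrightarrow> nat \<bar>a\<bar> \<in> {1..n}"
  unfolding signed_idx_def by auto

lemma shift_lattice: "x \<in> lattice n \<Longrightarrow> signed_idx n a \<Longrightarrow> shift x a \<in> lattice n"
  using signed_k[of n a] unfolding lattice_def shift_def by auto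

lemma shift_comm: "shift (shift x a) b = shift (shift x b) a"
  by (auto simp: shift_def fun_eq_iff)

lemma mdist_shift_both: "mdist n (shift x a) (shift y a) = mdist n x y"
  unfolding mdist_def shift_def by (rule sum.cong) auto

lemma mdist_shift_left:
  assumes "signed_idx n a"
  shows "mdist n (shift p a) s = (if inU p s a then mdist n p s - 1 else mdist n p s + 1)"
proof -
  define k where "k = nat \<bar>a\<bar>"
  have k: "k \<in> {1..n}" using signed_k[OF assms] k_def by simp
  have r: "(\<Sum>i\<in>{1..n}-{k}. \<bar>shift p a i - s i\<bar>) = (\<Sum>i\<in>{1..n}-{k}. \<bar>p i - s i\<bar>)"
    by (rule sum.cong) (auto simp: shift_def k_def)
  have e1: "mdist n (shift p a) s = \<bar>p k + sgn a - s k\<bar> + (\<Sum>i\<in>{1..n}-{k}. \<bar>p i - s i\<bar>)"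
    unfolding mdist_def using sum.remove[OF _ k, of "\<lambda>i. \<bar>shift p a i - s i\<bar>"] r
    by (simp add: shift_def k_def)
  have e2: "mdist n p s = \<bar>p k - s k\<bar> + (\<Sum>i\<in>{1..n}-{k}. \<bar>p i - s i\<bar>)"
    unfolding mdist_def using sum.remove[OF _ k, of "\<lambda>i. \<bar>p i - s i\<bar>"] by simp
  have a0: "a \<noteq> 0" using assms signed_idx_def by auto
  show ?thesis
  proof (cases "a > 0")
    case True
    then show ?thesis using e1 e2 unfolding inU_def k_def[symmetric] by auto
  next
    case False
    then have "a < 0" using a0 by auto
    then show ?thesis using e1 e2 unfolding inU_def k_def[symmetric] by auto
  qed
qed

lemma mdist_parity: "even (mdist n x y + mdist n y z + mdist n x z)"
proof -
  have "mdist n x y + mdist n y z + mdist n x z = (\<Sum>i\<in>{1..n}. \<bar>x i - y i\<bar> + \<bar>y i - z i\<bar> + \<bar>x i - z i\<bar>)"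
    by (simp add: mdist_def sum.distrib)
  also have "even \<dots>"
  proof (rule dvd_sum)
    fix i
    show "2 dvd (\<bar>x i - y i\<bar> + \<bar>y i - z i\<bar> + \<bar>x i - z i\<bar>)"
      by (simp add: abs_if) presburger
  qed
  finally show ?thesis .
qed

lemma U0:
  assumes "p \<in> lattice n" "s \<in> lattice n" "p \<noteq> s"
  shows "\<exists>a. signed_idx n a \<and> inU p s a"
proof -
  obtain i where i: "p i \<noteq> s i" using assms(3) by auto
  have iin: "i \<in> {1..n}" using i assms(1,2) unfolding lattice_def by (metis (mono_tags, lifting) mem_Collect_eq)
  define a where "a = sgn (s i - p i) * int i"
  have na: "nat \<bar>a\<bar> = i" using i iin unfolding a_def by (auto simp: abs_mult abs_sgn_eq)
  have sa: "sgn a = sgn (s i - p i)" using iin unfolding a_def by (auto simp: sgn_mult)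
  have "signed_idx n a" using na iin i unfolding signed_idx_def a_def by (auto simp: abs_mult sgn_0_0)
  moreover have "inU p s a" unfolding inU_def na sa using i by (auto simp: sgn_if)
  ultimately show ?thesis by blast
qed

lemma Uint:
  assumes "mdist n s t < mdist n p s + mdist n p t"
  shows "\<exists>a. signed_idx n a \<and> inU p s a \<and> inU p t a"
proof (rule ccontr)
  assume H: "\<not> ?thesis"
  have "\<And>k. k \<in> {1..n} \<Longrightarrow> \<bar>s k - t k\<bar> = \<bar>p k - s k\<bar> + \<bar>p k - t k\<bar>"
  proof -
    fix k assume k: "k \<in> {1..n}"
    show "\<bar>s k - t k\<bar> = \<bar>p k - s k\<bar> + \<bar>p k - t k\<bar>"
    proof (rule ccontr)
      assume C: "\<bar>s k - t k\<bar> \<noteq> \<bar>p k - s k\<bar> + \<bar>p k - t k\<bar>"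
      show False
      proof (cases "s k - p k > 0")
        case True
        then have "t k - p k > 0" using C by arith
        moreover have "signed_idx n (int k)" using k unfolding signed_idx_def by auto
        moreover have "inU p s (int k)" "inU p t (int k)" using True \<open>t k - p k > 0\<close> k unfolding inU_def by auto
        ultimately show False using H by blast
      next
        case False
        then have "s k - p k < 0" "t k - p k < 0" using C by arith+
        moreover have "signed_idx n (- int k)" using k unfolding signed_idx_def by auto
        moreover have "inU p s (- int k)" "inU p t (- int k)" using \<open>s k - p k < 0\<close> \<open>t k - p k < 0\<close> k unfolding inU_def by auto
        ultimately show False using H by blast
      qed
    qed
  qed
  then have "mdist n s t = mdist n p s + mdist n p t"
    unfolding mdist_def sum.distrib[symmetric] by (rule sum.cong[OF refl])
  then show False using assms by simp
qed

lemma sum_split2: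
  fixes n k l :: nat and f :: "nat \<Rightarrow> int"
  assumes "k \<in> {1..n}" "l \<in> {1..n}" "k \<noteq> l"
  shows "(\<Sum>i\<in>{1..n}. f i) = f k + f l + (\<Sum>i\<in>{1..n}-{k,l}. (f i::int))"
proof -
  have "(\<Sum>i\<in>{1..n}. f i) = f k + (\<Sum>i\<in>{1..n}-{k}. f i)" using sum.remove[OF _ assms(1), of f] by simp
  also have "(\<Sum>i\<in>{1..n}-{k}. f i) = f l + (\<Sum>i\<in>{1..n}-{k}-{l}. f i)"
    using sum.remove[of "{1..n}-{k}" l] assms by simp
  moreover have "{1..n}-{k}-{l} = {1..n}-{k,l}" by auto
  ultimately show ?thesis by simp
qed

lemma sgn_cases: "signed_idx n a \<Longrightarrow> sgn a = 1 \<or> sgn a = -1"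
  unfolding signed_idx_def by (auto simp: sgn_if)

lemma U1:
  assumes "p \<in> lattice n" "s \<in> lattice n" "mdist n p s \<le> 2"
    "signed_idx n a" "signed_idx n b" "a \<noteq> b" "inU p s a" "inU p s b"
  shows "\<bar>a\<bar> \<noteq> \<bar>b\<bar> \<and> s = shift (shift p a) b"
proof -
  define ka where "ka = nat \<bar>a\<bar>"
  define kb where "kb = nat \<bar>b\<bar>"
  have a0: "a \<noteq> 0" "b \<noteq> 0" using assms(4,5) signed_idx_def by auto
  have ab: "\<bar>a\<bar> \<noteq> \<bar>b\<bar>"
  proof
    assume "\<bar>a\<bar> = \<bar>b\<bar>"
    then have "b = - a" using assms(6) by (auto simp: abs_if split: if_splits)
    then show False using assms(7,8) a0 unfolding inU_def by (auto simp: sgn_if split: if_splits)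
  qed
  have kab: "ka \<noteq> kb" using ab unfolding ka_def kb_def by auto
  have ka: "ka \<in> {1..n}" "kb \<in> {1..n}" using signed_k assms(4,5) ka_def kb_def by auto
  have va: "sgn a * (s ka - p ka) \<ge> 1" "sgn b * (s kb - p kb) \<ge> 1"
    using assms(7,8) unfolding inU_def ka_def kb_def by auto
  have m: "mdist n p s = \<bar>p ka - s ka\<bar> + \<bar>p kb - s kb\<bar> + (\<Sum>i\<in>{1..n}-{ka,kb}. \<bar>p i - s i\<bar>)"
    unfolding mdist_def by (rule sum_split2[OF ka kab])
  have S0: "(\<Sum>i\<in>{1..n}-{ka,kb}. \<bar>p i - s i\<bar>) \<ge> 0" by (rule sum_nonneg) auto
  have A1: "\<bar>p ka - s ka\<bar> \<ge> 1" "\<bar>p kb - s kb\<bar> \<ge> 1"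
    using sgn_cases[OF assms(4)] sgn_cases[OF assms(5)] va by auto
  have A2: "\<bar>p ka - s ka\<bar> = 1" "\<bar>p kb - s kb\<bar> = 1" "(\<Sum>i\<in>{1..n}-{ka,kb}. \<bar>p i - s i\<bar>) = 0"
    using A1 S0 m assms(3) by linarith+
  have e1: "s ka = p ka + sgn a" "s kb = p kb + sgn b" "(\<Sum>i\<in>{1..n}-{ka,kb}. \<bar>p i - s i\<bar>) = 0"
    using sgn_cases[OF assms(4)] sgn_cases[OF assms(5)] va A2 by (auto simp: abs_if split: if_splits)
  have e2: "\<forall>i\<in>{1..n}-{ka,kb}. \<bar>p i - s i\<bar> = 0"
    using e1(3) by (subst sum_nonneg_eq_0_iff[symmetric]) auto
  have "s = shift (shift p a) b"
  proof
    fix i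
    show "s i = shift (shift p a) b i"
    proof (cases "i \<in> {1..n}")
      case True
      then show ?thesis using e1 e2 kab unfolding shift_def ka_def[symmetric] kb_def[symmetric]
        by (cases "i = ka"; cases "i = kb") auto
    next
      case False
      then have "i \<noteq> ka" "i \<noteq> kb" using ka by auto
      then show ?thesis using False assms(1,2) unfolding shift_def lattice_def ka_def[symmetric] kb_def[symmetric]
        by auto
    qed
  qed
  then show ?thesis using ab by blast
qed

lemma Uonly:
  assumes "\<bar>a\<bar> \<noteq> \<bar>b\<bar>" "signed_idx n a" "signed_idx n b" "signed_idx n c"
    "inU p (shift (shift p a) b) c"
  shows "c = a \<or> c = b"
proof -
  have a0: "a \<noteq> 0" "b \<noteq> 0" "c \<noteq> 0" using assms(2,3,4) signed_idx_def by auto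
  have kab: "nat \<bar>a\<bar> \<noteq> nat \<bar>b\<bar>" using assms(1) by auto
  have v: "shift (shift p a) b (nat \<bar>c\<bar>) - p (nat \<bar>c\<bar>) =
     (if nat \<bar>c\<bar> = nat \<bar>b\<bar> then sgn b else 0) + (if nat \<bar>c\<bar> = nat \<bar>a\<bar> then sgn a else 0)"
    unfolding shift_def using kab by auto
  have cs: "c = sgn c * \<bar>c\<bar>" "a = sgn a * \<bar>a\<bar>" "b = sgn b * \<bar>b\<bar>" by (simp_all add: sgn_mult_abs)
  show ?thesis
  proof (cases "nat \<bar>c\<bar> = nat \<bar>a\<bar>")
    case True
    then have "sgn c * sgn a \<ge> 1" using assms(5) v kab unfolding inU_def by auto
    then have "sgn c = sgn a" using sgn_cases[OF assms(2)] sgn_cases[OF assms(4)] by auto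
    moreover have "\<bar>c\<bar> = \<bar>a\<bar>" using True by auto
    ultimately show ?thesis using cs by metis
  next
    case False
    show ?thesis
    proof (cases "nat \<bar>c\<bar> = nat \<bar>b\<bar>")
      case True
      then have "sgn c * sgn b \<ge> 1" using assms(5) v False unfolding inU_def by auto
      then have "sgn c = sgn b" using sgn_cases[OF assms(3)] sgn_cases[OF assms(4)] by auto
      moreover have "\<bar>c\<bar> = \<bar>b\<bar>" using True by auto
      ultimately show ?thesis using cs by metis
    next
      case False2: False
      then show ?thesis using assms(5) v False unfolding inU_def by auto
    qed
  qed
qed

lemma d1: "signed_idx n a \<Longrightarrow> mdist n u (shift u a) = 1"
  using mdist_shift_left[of n a u u] by (simp add: mdist_sym mdist_self inU_def)

lemma d1': "signed_idx n a \<Longrightarrow> mdist n (shift u a) u = 1"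
  using d1 mdist_sym by metis

lemma tri2: "mdist n u w \<le> 1 \<Longrightarrow> mdist n w v \<le> 1 \<Longrightarrow> mdist n u v \<le> 2"
  using mdist_tri[of n u v w] by simp

lemma L1:
  assumes "p \<in> lattice n" "y \<in> lattice n" "mdist n p y = 1"
  shows "\<exists>a. signed_idx n a \<and> y = shift p a"
proof -
  have "p \<noteq> y" using assms(3) mdist_self by auto
  then obtain a where a: "signed_idx n a" "inU p y a" using U0 assms by blast
  then have "mdist n (shift p a) y = 0" using mdist_shift_left[OF a(1)] assms(3) by simp
  then have "shift p a = y" using mdist_eq0 shift_lattice assms a by blast
  then show ?thesis using a by blast
qed

lemma inU_of: "signed_idx n a \<Longrightarrow> mdist n p s = 2 \<Longrightarrow> mdist n (shift p a) s = 1 \<Longrightarrow> inU p s a"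
  using mdist_shift_left[of n a p s] by (auto split: if_splits)

lemma center: "signed_idx n a \<Longrightarrow> mdist n p s = 2 \<Longrightarrow> inU p s a \<Longrightarrow> mdist n (shift p a) s = 1"
  using mdist_shift_left[of n a p s] by (auto split: if_splits)

lemma odd_one: "0 \<le> (d::int) \<Longrightarrow> d \<le> 2 \<Longrightarrow> odd d \<Longrightarrow> d = 1"
  by presburger

lemma par: "even (a + b + c) \<Longrightarrow> odd (a + c) \<Longrightarrow> odd (b::int)" by presburger
lemma par': "even (a + b + c) \<Longrightarrow> odd (a + b) \<Longrightarrow> odd (c::int)" by presburger

definition cov :: "nat \<Rightarrow> pt set \<Rightarrow> bool" where
  "cov n S \<longleftrightarrow> (\<exists>c\<in>lattice n. S \<subseteq> closed_nbhd n c)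
       \<or> (\<exists>x\<in>lattice n. \<exists>i j. signed_idx n i \<and> signed_idx n j \<and> \<bar>i\<bar> \<noteq> \<bar>j\<bar> \<and>
            S \<subseteq> {x, shift x i, shift x j, shift (shift x i) j})
       \<or> (\<exists>x\<in>lattice n. \<exists>i j k. signed_idx n i \<and> signed_idx n j \<and> signed_idx n k \<and>
            \<bar>i\<bar> \<noteq> \<bar>j\<bar> \<and> \<bar>j\<bar> \<noteq> \<bar>k\<bar> \<and> \<bar>i\<bar> \<noteq> \<bar>k\<bar> \<and>
            S \<subseteq> {x, shift (shift x i) j, shift (shift x j) k, shift (shift x i) k})"

lemma cov_ball:
  assumes "c \<in> lattice n" "S \<subseteq> lattice n" "\<forall>s\<in>S. mdist n c s \<le> 1"
  shows "cov n S"
proof -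
  have "S \<subseteq> closed_nbhd n c" using assms unfolding closed_nbhd_def by auto
  then show ?thesis using assms(1) unfolding cov_def by blast
qed

lemma case1:
  assumes L: "S \<subseteq> lattice n" and D: "\<forall>u\<in>S. \<forall>v\<in>S. mdist n u v \<le> 2"
    and x: "x \<in> S" and y: "y \<in> S" and xy: "mdist n x y = 1"
  shows "cov n S"
proof (cases "\<forall>s\<in>S. mdist n x s \<le> 1")
  case True then show ?thesis using cov_ball L x by blast
next
  case False
  then obtain x' where x': "x' \<in> S" "mdist n x x' = 2" using D x by force
  show ?thesis
  proof (cases "\<forall>s\<in>S. mdist n y s \<le> 1")
    case True then show ?thesis using cov_ball L y by blast
  next
    case False
    then obtain y' where y': "y' \<in> S" "mdist n y y' = 2" using D y by force
    have xl: "x \<in> lattice n" "y \<in> lattice n" "x' \<in> lattice n" "y' \<in> lattice n" using L x y x' y' by auto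
    obtain a where a: "signed_idx n a" "y = shift x a" using L1 xl xy by blast
    have "mdist n y x' = 1"
      using odd_one[OF mdist_ge0 D[rule_format, OF y x'(1)]] xy x'(2) mdist_sym par[OF mdist_parity[of n x y x']] par'[OF mdist_parity[of n x y x']] by (simp add: mdist_sym)
    then have ia: "inU x x' a" using inU_of[OF a(1) x'(2)] a by simp
    have "mdist n x y' = 1"
      using odd_one[OF mdist_ge0 D[rule_format, OF x y'(1)]] xy y'(2) mdist_sym par[OF mdist_parity[of n x y y']] par'[OF mdist_parity[of n x y y']] by (simp add: mdist_sym)
    then obtain b where b: "signed_idx n b" "y' = shift x b" using L1 xl by blast
    have ab: "a \<noteq> b" using a b y'(2) by (auto simp: mdist_self)
    have "mdist n x' y' = 1"
      using odd_one[OF mdist_ge0 D[rule_format, OF x'(1) y'(1)]] x'(2) \<open>mdist n x y' = 1\<close> mdist_sym par[OF mdist_parity[of n x x' y']] par'[OF mdist_parity[of n x x' y']] by (simp add: mdist_sym)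
    then have ib: "inU x x' b" using inU_of[OF b(1) x'(2)] b mdist_sym by metis
    have q: "\<bar>a\<bar> \<noteq> \<bar>b\<bar>" "x' = shift (shift x a) b" using U1[OF xl(1) xl(3) _ a(1) b(1) ab ia ib] x'(2) by auto
    have "S \<subseteq> {x, shift x a, shift x b, shift (shift x a) b}"
    proof
      fix s assume s: "s \<in> S"
      have sl: "s \<in> lattice n" using s L by auto
      have "mdist n x s = 0 \<or> mdist n x s = 1 \<or> mdist n x s = 2"
        using D x s mdist_ge0[of n x s] by force
      moreover {
        assume "mdist n x s = 0" then have "s = x" using mdist_eq0 xl sl by metis }
      moreover {
        assume h: "mdist n x s = 1"
        then obtain c where c: "signed_idx n c" "s = shift x c" using L1 xl sl by blast
        have "mdist n x' s = 1"
          using odd_one[OF mdist_ge0 D[rule_format, OF x'(1) s]] x'(2) h mdist_sym par[OF mdist_parity[of n x x' s]] par'[OF mdist_parity[of n x x' s]] by (simp add: mdist_sym)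
        then have "inU x x' c" using inU_of[OF c(1) x'(2)] c mdist_sym by metis
        then have "c = a \<or> c = b" using Uonly[OF q(1) a(1) b(1) c(1)] q(2) by simp
        then have "s \<in> {x, shift x a, shift x b, shift (shift x a) b}" using c by auto }
      moreover {
        assume h: "mdist n x s = 2"
        have "mdist n y s = 1"
          using odd_one[OF mdist_ge0 D[rule_format, OF y s]] xy h mdist_sym par[OF mdist_parity[of n x y s]] par'[OF mdist_parity[of n x y s]] by (simp add: mdist_sym)
        then have i1: "inU x s a" using inU_of[OF a(1) h] a by simp
        have "mdist n y' s = 1"
          using odd_one[OF mdist_ge0 D[rule_format, OF y'(1) s]] \<open>mdist n x y' = 1\<close> h mdist_sym par[OF mdist_parity[of n x y' s]] par'[OF mdist_parity[of n x y' s]] by (simp add: mdist_sym)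
        then have i2: "inU x s b" using inU_of[OF b(1) h] b by simp
        have "s = shift (shift x a) b" using U1[OF xl(1) sl _ a(1) b(1) ab i1 i2] h by auto }
      ultimately show "s \<in> {x, shift x a, shift x b, shift (shift x a) b}" by blast
    qed
    then show ?thesis using a(1) b(1) q(1) xl(1) unfolding cov_def by blast
  qed
qed


lemma case2:
  assumes L: "S \<subseteq> lattice n" and D: "\<forall>u\<in>S. \<forall>v\<in>S. mdist n u v \<le> 2"
    and N1: "\<forall>u\<in>S. \<forall>v\<in>S. mdist n u v \<noteq> 1" and p: "p \<in> S"
  shows "cov n S"
proof -
  have two: "\<And>u v. u \<in> S \<Longrightarrow> v \<in> S \<Longrightarrow> u \<noteq> v \<Longrightarrow> mdist n u v = 2"
  proof -
    fix u v assume uv: "u \<in> S" "v \<in> S" "u \<noteq> v"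
    have "mdist n u v \<noteq> 0" using mdist_eq0 uv L by blast
    moreover have "mdist n u v \<le> 2" "mdist n u v \<noteq> 1" using D N1 uv by auto
    ultimately show "mdist n u v = 2" using mdist_ge0[of n u v] by linarith
  qed
  have pl: "p \<in> lattice n" using p L by auto
  show ?thesis
  proof (cases "\<exists>a. signed_idx n a \<and> (\<forall>s\<in>S-{p}. inU p s a)")
    case True
    then obtain a where a: "signed_idx n a" "\<forall>s\<in>S-{p}. inU p s a" by blast
    have "\<forall>s\<in>S. mdist n (shift p a) s \<le> 1"
    proof
      fix s assume s: "s \<in> S"
      show "mdist n (shift p a) s \<le> 1"
      proof (cases "s = p")
        case True then show ?thesis using d1'[OF a(1)] by simp
      next
        case False then show ?thesis using center[OF a(1) two[OF p s] ] a(2) s by simp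
      qed
    qed
    then show ?thesis using cov_ball[OF shift_lattice[OF pl a(1)] L] by blast
  next
    case False
    then have H: "\<And>a. signed_idx n a \<Longrightarrow> \<exists>s\<in>S-{p}. \<not> inU p s a" by blast
    show ?thesis
    proof (cases "S = {p}")
      case True then show ?thesis using cov_ball[OF pl L] by (simp add: mdist_self)
    next
      case False
      then obtain q where q: "q \<in> S" "q \<noteq> p" using p by blast
      have ql: "q \<in> lattice n" using q L by auto
      have int: "\<And>u v. u \<in> S \<Longrightarrow> v \<in> S \<Longrightarrow> u \<noteq> p \<Longrightarrow> v \<noteq> p \<Longrightarrow> u \<noteq> v \<Longrightarrow>
          \<exists>a. signed_idx n a \<and> inU p u a \<and> inU p v a"
      proof -
        fix u v assume uv: "u \<in> S" "v \<in> S" "u \<noteq> p" "v \<noteq> p" "u \<noteq> v"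
        have "mdist n u v < mdist n p u + mdist n p v"
          using two[OF uv(1,2,5)] two[OF p uv(1) uv(3)[symmetric]] two[OF p uv(2) uv(4)[symmetric]] by simp
        then show "\<exists>a. signed_idx n a \<and> inU p u a \<and> inU p v a" using Uint by blast
      qed
      have u1: "\<And>u a b. u \<in> S \<Longrightarrow> u \<noteq> p \<Longrightarrow> signed_idx n a \<Longrightarrow> signed_idx n b \<Longrightarrow> a \<noteq> b \<Longrightarrow>
          inU p u a \<Longrightarrow> inU p u b \<Longrightarrow> \<bar>a\<bar> \<noteq> \<bar>b\<bar> \<and> u = shift (shift p a) b"
      proof -
        fix u a b assume h: "u \<in> S" "u \<noteq> p" "signed_idx n a" "signed_idx n b" "a \<noteq> b" "inU p u a" "inU p u b"
        have "mdist n p u \<le> 2" using two[OF p h(1) h(2)[symmetric]] by simp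
        moreover have "u \<in> lattice n" using h(1) L by auto
        ultimately show "\<bar>a\<bar> \<noteq> \<bar>b\<bar> \<and> u = shift (shift p a) b" using U1[OF pl _ _ h(3-7)] by blast
      qed
      obtain a where a: "signed_idx n a" "inU p q a" using U0[OF pl ql q(2)[symmetric]] by blast
      obtain s where s: "s \<in> S" "s \<noteq> p" "\<not> inU p s a" using H[OF a(1)] by blast
      have sq: "s \<noteq> q" using s a by blast
      obtain b where b: "signed_idx n b" "inU p q b" "inU p s b" using int[OF q(1) s(1) q(2) s(2) sq[symmetric]] by blast
      have ab: "a \<noteq> b" using b s by blast
      have qf: "\<bar>a\<bar> \<noteq> \<bar>b\<bar>" "q = shift (shift p a) b" using u1[OF q a(1) b(1) ab a(2) b(2)] by auto
      obtain t where t: "t \<in> S" "t \<noteq> p" "\<not> inU p t b" using H[OF b(1)] by blast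
      have tq: "t \<noteq> q" "t \<noteq> s" using t b by auto
      obtain c' where c': "signed_idx n c'" "inU p q c'" "inU p t c'" using int[OF q(1) t(1) q(2) t(2) tq(1)[symmetric]] by blast
      have "c' = a \<or> c' = b" using Uonly[OF qf(1) a(1) b(1) c'(1)] c'(2) qf(2) by simp
      then have ta: "inU p t a" using c' t by auto
      obtain c where c: "signed_idx n c" "inU p s c" "inU p t c" using int[OF s(1) t(1) s(2) t(2) tq(2)[symmetric]] by blast
      have ca: "c \<noteq> a" "c \<noteq> b" using c s t by auto
      have sf: "\<bar>b\<bar> \<noteq> \<bar>c\<bar>" "s = shift (shift p b) c" using u1[OF s(1,2) b(1) c(1) ca(2)[symmetric] b(3) c(2)] by auto
      have tf: "\<bar>a\<bar> \<noteq> \<bar>c\<bar>" "t = shift (shift p a) c" using u1[OF t(1,2) a(1) c(1) ca(1)[symmetric] ta c(3)] by auto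
      have "S \<subseteq> {p, shift (shift p a) b, shift (shift p b) c, shift (shift p a) c}"
      proof
        fix r assume r: "r \<in> S"
        show "r \<in> {p, shift (shift p a) b, shift (shift p b) c, shift (shift p a) c}"
        proof (cases "r = p \<or> r = q \<or> r = s \<or> r = t")
          case True then show ?thesis using qf sf tf by auto
        next
          case False
          then have rr: "r \<noteq> p" "r \<noteq> q" "r \<noteq> s" "r \<noteq> t" by auto
          obtain u where u: "signed_idx n u" "inU p q u" "inU p r u" using int[OF q(1) r q(2) rr(1) rr(2)[symmetric]] by blast
          obtain v where v: "signed_idx n v" "inU p s v" "inU p r v" using int[OF s(1) r s(2) rr(1) rr(3)[symmetric]] by blast
          obtain w where w: "signed_idx n w" "inU p t w" "inU p r w" using int[OF t(1) r t(2) rr(1) rr(4)[symmetric]] by blast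
          have uu: "u = a \<or> u = b" using Uonly[OF qf(1) a(1) b(1) u(1)] u(2) qf(2) by simp
          have vv: "v = b \<or> v = c" using Uonly[OF sf(1) b(1) c(1) v(1)] v(2) sf(2) by simp
          have ww: "w = a \<or> w = c" using Uonly[OF tf(1) a(1) c(1) w(1)] w(2) tf(2) by simp
          have ra: "inU p r a \<and> inU p r b \<or> inU p r b \<and> inU p r c \<or> inU p r a \<and> inU p r c"
            using uu vv ww u v w by auto
          then have "r = shift (shift p a) b \<or> r = shift (shift p b) c \<or> r = shift (shift p a) c"
            using u1[OF r rr(1) a(1) b(1) ab] u1[OF r rr(1) b(1) c(1) ca(2)[symmetric]]
              u1[OF r rr(1) a(1) c(1) ca(1)[symmetric]] by blast
          then show ?thesis by auto
        qed
      qed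
      then show ?thesis using a(1) b(1) c(1) qf(1) sf(1) tf(1) pl unfolding cov_def by blast
    qed
  qed
qed

lemma classify:
  assumes "S \<subseteq> lattice n" "S \<noteq> {}" "\<forall>u\<in>S. \<forall>v\<in>S. mdist n u v \<le> 2"
  shows "cov n S"
proof (cases "\<exists>x\<in>S. \<exists>y\<in>S. mdist n x y = 1")
  case True
  then obtain x y where "x \<in> S" "y \<in> S" "mdist n x y = 1" by blast
  then show ?thesis using case1[OF assms(1,3)] by blast
next
  case False
  then have N: "\<forall>u\<in>S. \<forall>v\<in>S. mdist n u v \<noteq> 1" by blast
  obtain p where "p \<in> S" using assms(2) by blast
  then show ?thesis using case2[OF assms(1,3) N] by blast
qed

lemma grid_lattice: "grid n m \<subseteq> lattice n"
  unfolding grid_def by auto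

lemma max_eq:
  assumes M: "maximal_simplex n X 2 \<tau>" and XL: "X \<subseteq> lattice n"
    and F: "\<tau> \<subseteq> F" "finite F" "\<forall>u\<in>F. \<forall>v\<in>F. mdist n u v \<le> 2"
  shows "\<tau> = F \<inter> X"
proof -
  have v: "vr_simplex n X 2 \<tau>" using M unfolding maximal_simplex_def by blast
  have "vr_simplex n X 2 (F \<inter> X)" using v F unfolding vr_simplex_def by blast
  moreover have "\<tau> \<subseteq> F \<inter> X" using v F unfolding vr_simplex_def by blast
  ultimately show ?thesis using M unfolding maximal_simplex_def by blast
qed

lemma nbhd_sub: "c \<in> lattice n \<Longrightarrow> closed_nbhd n c \<subseteq> insert c (shift c ` {a. signed_idx n a})"
proof
  fix y assume c: "c \<in> lattice n" and y: "y \<in> closed_nbhd n c"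
  have yl: "y \<in> lattice n" and d: "mdist n c y \<le> 1" using y unfolding closed_nbhd_def by auto
  have "mdist n c y = 0 \<or> mdist n c y = 1" using d mdist_ge0[of n c y] by linarith
  then show "y \<in> insert c (shift c ` {a. signed_idx n a})"
  proof
    assume "mdist n c y = 0" then show ?thesis using mdist_eq0[OF c yl] by simp
  next
    assume "mdist n c y = 1" then show ?thesis using L1[OF c yl] by blast
  qed
qed

lemma nbhd_fin: "c \<in> lattice n \<Longrightarrow> finite (closed_nbhd n c)"
proof -
  assume c: "c \<in> lattice n"
  have "{a. signed_idx n a} \<subseteq> {- int n..int n}" unfolding signed_idx_def by auto
  then have "finite {a. signed_idx n a}" using finite_subset by blast
  then show ?thesis using finite_subset[OF nbhd_sub[OF c]] by blast
qed

lemma nbhd_diam: "\<forall>u\<in>closed_nbhd n c. \<forall>v\<in>closed_nbhd n c. mdist n u v \<le> 2"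
  unfolding closed_nbhd_def using tri2 mdist_sym by (metis (no_types, lifting) mem_Collect_eq)

lemma square_diam:
  assumes "signed_idx n i" "signed_idx n j"
  shows "\<forall>u\<in>{x, shift x i, shift x j, shift (shift x i) j}. \<forall>v\<in>{x, shift x i, shift x j, shift (shift x i) j}. mdist n u v \<le> 2"
proof -
  have a: "mdist n x (shift x i) = 1" "mdist n x (shift x j) = 1"
    "mdist n (shift x i) (shift (shift x i) j) = 1" "mdist n (shift x j) (shift (shift x i) j) = 1"
    using d1[OF assms(1)] d1[OF assms(2)] d1[OF assms(2), of "shift x i"] d1[OF assms(1), of "shift x j"]
    by (simp_all add: shift_comm[of x i j])
  have b: "mdist n x (shift (shift x i) j) \<le> 2" using tri2[of n x "shift x i"] a by simp
  have c: "mdist n (shift x i) (shift x j) \<le> 2" using tri2[of n "shift x i" x] a mdist_sym by (metis order_refl)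
  show ?thesis using a b c mdist_sym[of n] mdist_self[of n] by auto
qed

lemma tri_diam:
  assumes "signed_idx n i" "signed_idx n j" "signed_idx n k"
  shows "\<forall>u\<in>{x, shift (shift x i) j, shift (shift x j) k, shift (shift x i) k}.
         \<forall>v\<in>{x, shift (shift x i) j, shift (shift x j) k, shift (shift x i) k}. mdist n u v \<le> 2"
proof -
  have g: "\<And>y a b. signed_idx n a \<Longrightarrow> signed_idx n b \<Longrightarrow> mdist n (shift y a) (shift y b) \<le> 2"
    using tri2 d1 d1' by (metis order_refl)
  have g2: "\<And>y a b. signed_idx n a \<Longrightarrow> signed_idx n b \<Longrightarrow> mdist n y (shift (shift y a) b) \<le> 2"
    using tri2 d1 by (metis order_refl)
  have e1: "mdist n (shift (shift x i) j) (shift (shift x j) k) \<le> 2"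
    using g[OF assms(1) assms(3), of "shift x j"] by (simp add: shift_comm[of x i j])
  have e2: "mdist n (shift (shift x i) j) (shift (shift x i) k) \<le> 2"
    using g[OF assms(2) assms(3), of "shift x i"] by simp
  have e3: "mdist n (shift (shift x j) k) (shift (shift x i) k) \<le> 2"
    using g[OF assms(2) assms(1), of "shift x k"] by (simp add: shift_comm[of x _ k])
  have e4: "mdist n x (shift (shift x i) j) \<le> 2" "mdist n x (shift (shift x j) k) \<le> 2"
     "mdist n x (shift (shift x i) k) \<le> 2" using g2 assms by auto
  show ?thesis using e1 e2 e3 e4 mdist_sym[of n] mdist_self[of n] by auto
qed

theorem lemma4p2:
  fixes n m :: nat and \<tau> :: "pt set"
  assumes "n \<ge> 2" and "m > 0"
    and "maximal_simplex n (grid n m) 2 \<tau>"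
  shows "(\<exists>x\<in>lattice n. \<tau> = closed_nbhd n x \<inter> grid n m)
       \<or> (\<exists>x\<in>lattice n. \<exists>i j. signed_idx n i \<and> signed_idx n j \<and> \<bar>i\<bar> \<noteq> \<bar>j\<bar> \<and>
            \<tau> = {x, shift x i, shift x j, shift (shift x i) j} \<inter> grid n m)
       \<or> (\<exists>x\<in>lattice n. \<exists>i j k. signed_idx n i \<and> signed_idx n j \<and> signed_idx n k \<and>
            \<bar>i\<bar> \<noteq> \<bar>j\<bar> \<and> \<bar>j\<bar> \<noteq> \<bar>k\<bar> \<and> \<bar>i\<bar> \<noteq> \<bar>k\<bar> \<and>
            \<tau> = {x, shift (shift x i) j, shift (shift x j) k, shift (shift x i) k} \<inter> grid n m)"
proof -
  have M: "maximal_simplex n (grid n m) 2 \<tau>" by fact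
  have v: "\<tau> \<noteq> {}" "\<tau> \<subseteq> grid n m" "\<forall>u\<in>\<tau>. \<forall>v\<in>\<tau>. mdist n u v \<le> 2"
    using M unfolding maximal_simplex_def vr_simplex_def by auto
  have "cov n \<tau>" using classify[OF _ v(1) v(3)] v(2) grid_lattice by blast
  then consider
      (A) c where "c \<in> lattice n" "\<tau> \<subseteq> closed_nbhd n c"
    | (B) x i j where "x \<in> lattice n" "signed_idx n i" "signed_idx n j" "\<bar>i\<bar> \<noteq> \<bar>j\<bar>"
          "\<tau> \<subseteq> {x, shift x i, shift x j, shift (shift x i) j}"
    | (C) x i j k where "x \<in> lattice n" "signed_idx n i" "signed_idx n j" "signed_idx n k"
          "\<bar>i\<bar> \<noteq> \<bar>j\<bar>" "\<bar>j\<bar> \<noteq> \<bar>k\<bar>" "\<bar>i\<bar> \<noteq> \<bar>k\<bar>"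
          "\<tau> \<subseteq> {x, shift (shift x i) j, shift (shift x j) k, shift (shift x i) k}"
    unfolding cov_def by blast
  then show ?thesis
  proof cases
    case A
    then have "\<tau> = closed_nbhd n c \<inter> grid n m"
      using max_eq[OF M grid_lattice _ nbhd_fin nbhd_diam] by blast
    then show ?thesis using A(1) by blast
  next
    case B
    then have "\<tau> = {x, shift x i, shift x j, shift (shift x i) j} \<inter> grid n m"
      using max_eq[OF M grid_lattice B(5) _ square_diam[OF B(2,3)]] by blast
    then show ?thesis using B by blast
  next
    case C
    then have "\<tau> = {x, shift (shift x i) j, shift (shift x j) k, shift (shift x i) k} \<inter> grid n m"
      using max_eq[OF M grid_lattice C(8) _ tri_diam[OF C(2,3,4)]] by blast
    then show ?thesis using C by blast
  qed
qed

end
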